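(* Every $k$-colorable graph of pathwidth at most $p$ is $p(k-1)$-almost equitably $k$-colorable.
   Context: A $k$-coloring is equitable if its $k$ color classes (stable sets) have sizes pairwise differing by at most one. A graph $G$ is $q$-almost equitably $k$-colorable if there is a set $X$ of at most $q$ vertices such that $G\setminus X$ has an equitable $k$-coloring. *)

theory Defs
  imports Main
begin

definition graph :: "'a set \<Rightarrow> 'a set set \<Rightarrow> bool" where
  "graph V E \<longleftrightarrow> finite V \<and> (\<forall>e\<in>E. e \<subseteq> V \<and> card e = 2)"

definition path_decomposition :: "'a set \<Rightarrow> 'a set set \<Rightarrow> 'a set list \<Rightarrow> bool" where
  "path_decomposition V E Bs \<longleftrightarrow>
     (\<forall>B\<in>set Bs. B \<subseteq> V) \<and>
     (\<forall>v\<in>V. \<exists>i<length Bs. v \<in> Bs ! i) \<and>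
     (\<forall>e\<in>E. \<exists>i<length Bs. e \<subseteq> Bs ! i) \<and>
     (\<forall>v i j l. i \<le> j \<longrightarrow> j \<le> l \<longrightarrow> l < length Bs \<longrightarrow> v \<in> Bs ! i \<longrightarrow> v \<in> Bs ! l
        \<longrightarrow> v \<in> Bs ! j)"

definition pathwidth_le :: "'a set \<Rightarrow> 'a set set \<Rightarrow> nat \<Rightarrow> bool" where
  "pathwidth_le V E p \<longleftrightarrow>
     (\<exists>Bs. path_decomposition V E Bs \<and> (\<forall>B\<in>set Bs. card B \<le> p + 1))"

definition proper_coloring :: "'a set \<Rightarrow> 'a set set \<Rightarrow> nat \<Rightarrow> ('a \<Rightarrow> nat) \<Rightarrow> bool" where
  "proper_coloring V E k c \<longleftrightarrow>
     (\<forall>v\<in>V. c v < k) \<and> (\<forall>e\<in>E. \<forall>u\<in>e. \<forall>v\<in>e. u \<noteq> v \<longrightarrow> c u \<noteq> c v)"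

definition colorable :: "'a set \<Rightarrow> 'a set set \<Rightarrow> nat \<Rightarrow> bool" where
  "colorable V E k \<longleftrightarrow> (\<exists>c. proper_coloring V E k c)"

definition equitable_coloring :: "'a set \<Rightarrow> 'a set set \<Rightarrow> nat \<Rightarrow> ('a \<Rightarrow> nat) \<Rightarrow> bool" where
  "equitable_coloring V E k c \<longleftrightarrow> proper_coloring V E k c \<and>
     (\<forall>i<k. \<forall>j<k. card {v\<in>V. c v = i} \<le> card {v\<in>V. c v = j} + 1)"

definition equitably_colorable :: "'a set \<Rightarrow> 'a set set \<Rightarrow> nat \<Rightarrow> bool" where
  "equitably_colorable V E k \<longleftrightarrow> (\<exists>c. equitable_coloring V E k c)"

definition delete_vertices :: "'a set \<Rightarrow> 'a set set \<Rightarrow> 'a set \<Rightarrow> 'a set \<times> 'a set set" where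
  "delete_vertices V E X = (V - X, {e\<in>E. e \<inter> X = {}})"

definition almost_equitably_colorable :: "'a set \<Rightarrow> 'a set set \<Rightarrow> nat \<Rightarrow> nat \<Rightarrow> bool" where
  "almost_equitably_colorable V E q k \<longleftrightarrow>
     (\<exists>X. X \<subseteq> V \<and> card X \<le> q \<and>
        (case delete_vertices V E X of (V', E') \<Rightarrow> equitably_colorable V' E' k))"

end

theory Submission
  imports Defs
begin

lemma card_classes:
  assumes "finite V" "\<forall>v\<in>V. c v < (k::nat)"
  shows "card V = (\<Sum>i<k. card {v\<in>V. c v = i})"
proof -
  have "V = (\<Union>i\<in>{..<k}. {v\<in>V. c v = i})" using assms(2) by auto
  hence "card V = card (\<Union>i\<in>{..<k}. {v\<in>V. c v = i})" by simp
  also have "\<dots> = (\<Sum>i<k. card {v\<in>V. c v = i})"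
    by (rule card_UN_disjoint) (use assms(1) in auto)
  finally show ?thesis .
qed

lemma div_shift:
  fixes N k' i :: nat
  assumes "1 \<le> k'" "i < k'"
  shows "(N - (N + k') div (Suc k') + i) div k' = (N + i) div (Suc k')"
proof -
  define q where "q = N div Suc k'"
  define r where "r = N mod Suc k'"
  have N: "N = q * Suc k' + r" unfolding q_def r_def using div_mult_mod_eq[of N "Suc k'"] by simp
  have r: "r \<le> k'" unfolding r_def using mod_less_divisor[of "Suc k'" N] by linarith
  show ?thesis
  proof (cases "r = 0")
    case True
    have s: "(N + k') div Suc k' = q" using N True by (intro div_nat_eqI) auto
    have a: "(N + i) div Suc k' = q" using N True assms by (intro div_nat_eqI) auto
    have "(N - q + i) div k' = q" using N True assms by (intro div_nat_eqI) (auto simp: algebra_simps)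
    thus ?thesis using s a by simp
  next
    case False
    have s: "(N + k') div Suc k' = Suc q" using N False r by (intro div_nat_eqI) auto
    show ?thesis
    proof (cases "r + i \<ge> Suc k'")
      case True
      have a: "(N + i) div Suc k' = Suc q" using N True assms r by (intro div_nat_eqI) auto
      have "(N - Suc q + i) div k' = Suc q" using N True False assms r by (intro div_nat_eqI) (auto simp: algebra_simps)
      thus ?thesis using s a by simp
    next
      case F2: False
      have a: "(N + i) div Suc k' = q" using N F2 assms r by (intro div_nat_eqI) auto
      have "(N - Suc q + i) div k' = q" using N F2 False assms r by (intro div_nat_eqI) (auto simp: algebra_simps)
      thus ?thesis using s a by simp
    qed
  qed
qed


definition adj :: "'a set set \<Rightarrow> 'a \<Rightarrow> 'a \<Rightarrow> bool" where
  "adj E u w \<longleftrightarrow> (\<exists>e\<in>E. u \<in> e \<and> w \<in> e \<and> u \<noteq> w)"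

definition cutset :: "'a set set \<Rightarrow> ('a \<Rightarrow> nat) \<Rightarrow> 'a set \<Rightarrow> nat \<Rightarrow> 'a set" where
  "cutset E \<kappa> V T = {u\<in>V. \<kappa> u < T \<and> (\<exists>w\<in>V. T \<le> \<kappa> w \<and> adj E u w)}"

lemma adj_sym: "adj E u w \<Longrightarrow> adj E w u"
  unfolding adj_def by blast

lemma cutset_mono: "W \<subseteq> V \<Longrightarrow> cutset E \<kappa> W T \<subseteq> cutset E \<kappa> V T"
  unfolding cutset_def by blast

lemma cutset_finite: "finite V \<Longrightarrow> finite (cutset E \<kappa> V T)"
  unfolding cutset_def by simp

lemma main_lemma:
  fixes k :: nat and V :: "'a set" and c :: "'a \<Rightarrow> nat"
  assumes "finite V" "inj_on \<kappa> V" "\<forall>T. card (cutset E \<kappa> V T) \<le> p"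
    "\<forall>v\<in>V. c v < k" "\<forall>u\<in>V. \<forall>w\<in>V. adj E u w \<longrightarrow> c u \<noteq> c w"
    "N + p * (k - 1) \<le> card V"
  shows "\<exists>V' d. V' \<subseteq> V \<and> card V' = N \<and> (\<forall>v\<in>V'. d v < k) \<and>
     (\<forall>u\<in>V'. \<forall>w\<in>V'. adj E u w \<longrightarrow> d u \<noteq> (d w :: nat)) \<and>
     (\<forall>i<k. card {v\<in>V'. d v = i} = (N + i) div k)"
  using assms
proof (induction k arbitrary: V c N)
  case 0
  hence "V = {}" by auto
  hence "N = 0" using 0 by simp
  show ?case
    by (rule exI[of _ "{}"], rule exI[of _ "\<lambda>_. 0"]) (simp add: \<open>N = 0\<close>)
next
  case (Suc k')
  show ?case
  proof (cases "k' = 0")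
    case True
    have "N \<le> card V" using Suc.prems(6) True by simp
    then obtain V' where V': "V' \<subseteq> V" "card V' = N"
      using obtain_subset_with_card_n by metis
    have noadj: "\<forall>u\<in>V'. \<forall>w\<in>V'. \<not> adj E u w"
      using Suc.prems(4,5) V'(1) True by fastforce
    show ?thesis
      by (rule exI[of _ V'], rule exI[of _ "\<lambda>_. 0"]) (use V' noadj True in auto)
  next
    case False
    hence k1: "1 \<le> k'" by simp
    have "N + p * k' \<le> card V" using Suc.prems(6) by simp
    then obtain W where W: "W \<subseteq> V" "card W = N + p * k'"
      using obtain_subset_with_card_n by metis
    have finW: "finite W" using W(1) Suc.prems(1) finite_subset by blast
    have injW: "inj_on \<kappa> W" using W(1) Suc.prems(2) inj_on_subset by blast
    have cutW: "card (cutset E \<kappa> W T) \<le> p" for T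
      using card_mono[OF cutset_finite[OF Suc.prems(1)] cutset_mono[OF W(1)]] Suc.prems(3) le_trans by blast
    have colW: "\<forall>v\<in>W. c v < Suc k'" using W(1) Suc.prems(4) by blast
    have propW: "\<forall>u\<in>W. \<forall>w\<in>W. adj E u w \<longrightarrow> c u \<noteq> c w" using W(1) Suc.prems(5) by blast
    define s where "s = (N + k') div Suc k'"
    have sN: "s \<le> N"
    proof -
      have "N + k' < Suc N * Suc k'" by simp
      hence "s < Suc N" unfolding s_def by (simp add: less_mult_imp_div_less)
      thus ?thesis by simp
    qed
    have Ns: "N \<le> Suc k' * s"
    proof -
      have "N + k' = Suc k' * s + (N + k') mod Suc k'" unfolding s_def
        using div_mult_mod_eq[of "N + k'" "Suc k'"] by (simp only: mult.commute)
      moreover have "(N + k') mod Suc k' \<le> k'"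
        using mod_less_divisor[of "Suc k'" "N + k'"] by linarith
      ultimately show ?thesis by linarith
    qed
    define Cl where "Cl i = {v\<in>W. c v = i}" for i
    have sumW: "card W = (\<Sum>i<Suc k'. card (Cl i))"
      unfolding Cl_def by (rule card_classes[OF finW colW])
    obtain a where a: "a < Suc k'" "s \<le> card (Cl a)"
    proof (rule ccontr)
      assume "\<not> thesis"
      hence lt: "\<forall>i<Suc k'. card (Cl i) + 1 \<le> s" using that by force
      have "(\<Sum>i<Suc k'. card (Cl i) + 1) \<le> (\<Sum>i<Suc k'. s)"
        by (rule sum_mono) (use lt in auto)
      moreover have "(\<Sum>i<Suc k'. card (Cl i) + 1) = (\<Sum>i<Suc k'. card (Cl i)) + (\<Sum>i<Suc k'. (1::nat))"
        by (rule sum.distrib)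
      moreover have "(\<Sum>i<Suc k'. (1::nat)) = Suc k'" by simp
      moreover have "(\<Sum>i<Suc k'. s) = Suc k' * s" by simp
      ultimately have "card W + Suc k' \<le> Suc k' * s" using sumW by linarith
      moreover have "Suc k' * s \<le> N + k'" unfolding s_def
        using div_mult_mod_eq[of "N + k'" "Suc k'"] by (metis le_add1 mult.commute)
      ultimately show False using W(2) by linarith
    qed
    obtain b where b: "b < Suc k'" "b \<noteq> a" "card (Cl b) \<le> s + p"
    proof (rule ccontr)
      assume "\<not> thesis"
      hence gt: "\<forall>i\<in>{..<Suc k'} - {a}. s + p + 1 \<le> card (Cl i)" using that by force
      have "card W = card (Cl a) + (\<Sum>i\<in>{..<Suc k'} - {a}. card (Cl i))"
        using sumW a(1) sum.remove[of "{..<Suc k'}" a "\<lambda>i. card (Cl i)"] by simp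
      moreover have "(\<Sum>i\<in>{..<Suc k'} - {a}. s + p + 1) \<le> (\<Sum>i\<in>{..<Suc k'} - {a}. card (Cl i))"
        by (rule sum_mono) (use gt in auto)
      moreover have "card ({..<Suc k'} - {a}) = k'" using a(1) by simp
      ultimately have "s + k' * (s + p + 1) \<le> card W" using a(2) by simp
      moreover have "k' * (s + p + 1) = k' * s + p * k' + k'" by (simp add: algebra_simps)
      moreover have "Suc k' * s = s + k' * s" by simp
      ultimately show False using W(2) Ns k1 by linarith
    qed
    define A where "A T = {u\<in>W. \<kappa> u < T \<and> c u = a \<and> (\<exists>w\<in>W. T \<le> \<kappa> w \<and> c w = b \<and> adj E u w)}" for T
    define B where "B T = {u\<in>W. \<kappa> u < T \<and> c u = b \<and> (\<exists>w\<in>W. T \<le> \<kappa> w \<and> c w = a \<and> adj E u w)}" for T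
    define P where "P T = {u\<in>W. \<kappa> u < T \<and> c u = a}" for T
    define Q where "Q T = {u\<in>W. T \<le> \<kappa> u \<and> c u = b}" for T
    define J where "J T = (P T - A T) \<union> Q T" for T
    define psi where "psi T = card (P T) + card (Q T) + card (B T)" for T
    have finA: "finite (A T)" for T unfolding A_def using finW by simp
    have finB: "finite (B T)" for T unfolding B_def using finW by simp
    have finP: "finite (P T)" for T unfolding P_def using finW by simp
    have finQ: "finite (Q T)" for T unfolding Q_def using finW by simp
    have AP: "A T \<subseteq> P T" for T unfolding A_def P_def by blast
    have F1: "card (J T) + card (A T) + card (B T) = psi T" for T
    proof -
      have "card (J T) = card (P T - A T) + card (Q T)"
        unfolding J_def by (rule card_Un_disjoint) (use finP finQ in \<open>auto simp: P_def Q_def\<close>)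
      moreover have "card (P T - A T) = card (P T) - card (A T)"
        using card_Diff_subset[OF finA AP] .
      moreover have "card (A T) \<le> card (P T)" using card_mono[OF finP AP] .
      ultimately show ?thesis unfolding psi_def by linarith
    qed
    have F2: "card (A T) + card (B T) \<le> p" for T
    proof -
      have "card (A T) + card (B T) = card (A T \<union> B T)"
        by (rule card_Un_disjoint[symmetric]) (use finA finB b(2) in \<open>auto simp: A_def B_def\<close>)
      also have "\<dots> \<le> card (cutset E \<kappa> W T)"
        by (rule card_mono) (use finW in \<open>auto simp: cutset_def A_def B_def\<close>)
      finally show ?thesis using cutW[of T] by linarith
    qed
    have F3: "psi (Suc T) \<le> psi T + 1" for T
    proof -
      define Xa where "Xa = {u\<in>W. \<kappa> u = T \<and> c u = a}"
      define Xb where "Xb = {u\<in>W. \<kappa> u = T \<and> c u = b}"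
      have finXa: "finite Xa" "finite Xb" unfolding Xa_def Xb_def using finW by auto
      have "card Xa \<le> Suc 0"
        apply (subst card_le_Suc0_iff_eq[OF finXa(1)])
        using injW unfolding Xa_def by (auto dest: inj_onD)
      have "P (Suc T) \<subseteq> P T \<union> Xa" unfolding P_def Xa_def by auto
      hence c1: "card (P (Suc T)) \<le> card (P T) + card Xa"
        by (meson card_Un_le card_mono finP finXa(1) finite_UnI le_trans)
      have "Q T = Q (Suc T) \<union> Xb" unfolding Q_def Xb_def by auto
      moreover have "Q (Suc T) \<inter> Xb = {}" unfolding Q_def Xb_def by auto
      ultimately have c2: "card (Q T) = card (Q (Suc T)) + card Xb"
        using card_Un_disjoint[OF finQ finXa(2), of "Suc T"] by simp
      have "B (Suc T) \<subseteq> B T \<union> Xb" unfolding B_def Xb_def by (auto simp: less_Suc_eq) (use Suc_leD in blast)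
      hence c3: "card (B (Suc T)) \<le> card (B T) + card Xb"
        by (meson card_Un_le card_mono finB finXa(2) finite_UnI le_trans)
      show ?thesis unfolding psi_def using c1 c2 c3 \<open>card Xa \<le> Suc 0\<close> by linarith
    qed
    obtain M where M: "\<forall>v\<in>W. \<kappa> v < M"
      using finite_nat_set_iff_bounded[of "\<kappa> ` W"] finW by auto
    have F4: "s \<le> card (J M)"
    proof -
      have "Cl a \<subseteq> J M" unfolding Cl_def J_def P_def A_def using M by auto
      hence "card (Cl a) \<le> card (J M)" by (rule card_mono[rotated]) (use finP finQ in \<open>simp add: J_def\<close>)
      thus ?thesis using a(2) by linarith
    qed
    have F5: "psi 0 = card (Cl b)"
    proof -
      have "P 0 = {}" "B 0 = {}" "Q 0 = Cl b" unfolding P_def B_def Q_def Cl_def by auto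
      thus ?thesis unfolding psi_def by simp
    qed
    define T0 where "T0 = (LEAST T. s \<le> card (J T))"
    have T0a: "s \<le> card (J T0)" unfolding T0_def by (rule LeastI[of _ M]) (rule F4)
    have T0b: "psi T0 \<le> s + p"
    proof (cases T0)
      case 0
      thus ?thesis using F5 b(3) by simp
    next
      case (Suc T')
      have "\<not> s \<le> card (J T')"
        using not_less_Least[of T' "\<lambda>T. s \<le> card (J T)"] Suc unfolding T0_def by simp
      thus ?thesis using F3[of T'] F1[of T'] F2[of T'] unfolding Suc by linarith
    qed
    obtain I where I: "I \<subseteq> J T0" "card I = s"
      using obtain_subset_with_card_n[OF T0a] by metis
    define R where "R = W - (J T0 \<union> A T0 \<union> B T0)"
    have finR: "finite R" unfolding R_def using finW by simp
    have RW: "R \<subseteq> W" unfolding R_def by blast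
    have cardR: "N - s + p * (k' - 1) \<le> card R"
    proof -
      have sub: "J T0 \<union> A T0 \<union> B T0 \<subseteq> W" unfolding J_def A_def B_def P_def Q_def by blast
      have "card R = card W - card (J T0 \<union> A T0 \<union> B T0)"
        unfolding R_def by (rule card_Diff_subset) (use finW sub finite_subset in blast)+
      moreover have "card (J T0 \<union> A T0 \<union> B T0) \<le> card (J T0) + card (A T0) + card (B T0)"
        by (meson add_le_mono card_Un_le le_trans order_refl)
      moreover have "p * k' = p * (k' - 1) + p" using k1
        by (metis Suc_diff_le diff_Suc_1 mult_Suc_right add.commute)
      ultimately show ?thesis using F1[of T0] T0b W(2) sN by linarith
    qed
    define sq where "sq x = (if a < x then x - 1 else x)" for x :: nat
    define c' where "c' v = sq (if c v = a then b else c v)" for v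
    have c'k: "\<forall>v\<in>R. c' v < k'"
    proof
      fix v assume "v \<in> R"
      hence "c v < Suc k'" using colW RW by blast
      thus "c' v < k'" unfolding c'_def sq_def using a(1) b(1,2) by auto
    qed
    have sq_inj: "sq x = sq y \<Longrightarrow> x \<noteq> a \<Longrightarrow> y \<noteq> a \<Longrightarrow> x = y" for x y
      unfolding sq_def by (auto split: if_splits)
    have c'prop: "\<forall>u\<in>R. \<forall>w\<in>R. adj E u w \<longrightarrow> c' u \<noteq> c' w"
    proof (intro ballI impI)
      fix u w assume u: "u \<in> R" and w: "w \<in> R" and uw: "adj E u w"
      have cuw: "c u \<noteq> c w" using propW u w uw RW by blast
      have notab: False if "x \<in> R" "y \<in> R" "adj E x y" "c x = a" "c y = b" for x y
      proof -
        have "T0 \<le> \<kappa> x" using that(1,4) unfolding R_def J_def P_def by auto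
        moreover have "\<kappa> y < T0" using that(2,5) unfolding R_def J_def Q_def by auto
        moreover have "y \<in> W" "x \<in> W" using that(1,2) RW by auto
        moreover have "adj E y x" using adj_sym[OF that(3)] .
        ultimately have "y \<in> B T0" unfolding B_def using that(4,5) by blast
        thus False using that(2) unfolding R_def by blast
      qed
      have "(if c u = a then b else c u) \<noteq> (if c w = a then b else c w)"
        using cuw notab[OF u w uw] notab[OF w u adj_sym[OF uw]] by auto
      moreover have "(if c u = a then b else c u) \<noteq> a" "(if c w = a then b else c w) \<noteq> a"
        using b(2) by auto
      ultimately show "c' u \<noteq> c' w" unfolding c'_def using sq_inj by blast
    qed
    have cutR: "\<forall>T. card (cutset E \<kappa> R T) \<le> p"
      using card_mono[OF cutset_finite[OF finW] cutset_mono[OF RW]] cutW le_trans by blast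
    obtain V'' d'' where IH: "V'' \<subseteq> R" "card V'' = N - s" "\<forall>v\<in>V''. d'' v < k'"
      "\<forall>u\<in>V''. \<forall>w\<in>V''. adj E u w \<longrightarrow> d'' u \<noteq> (d'' w :: nat)"
      "\<forall>i<k'. card {v\<in>V''. d'' v = i} = (N - s + i) div k'"
      using Suc.IH[OF finR inj_on_subset[OF injW RW] cutR c'k c'prop cardR] by blast
    define V' where "V' = I \<union> V''"
    define d where "d v = (if v \<in> I then k' else d'' v)" for v
    have IR: "I \<inter> V'' = {}" using I(1) IH(1) unfolding R_def by blast
    have finI: "finite I" using I(1) finP finQ finite_subset unfolding J_def by blast
    have finV'': "finite V''" using IH(1) finR finite_subset by blast
    have indep: False if "x \<in> J T0" "y \<in> J T0" "adj E x y" for x y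
    proof -
      have "c x \<noteq> c y" using propW that unfolding J_def P_def Q_def by blast
      show False
        using that \<open>c x \<noteq> c y\<close> adj_sym[OF that(3)] unfolding J_def P_def Q_def A_def by auto
    qed
    show ?thesis
    proof (rule exI[of _ V'], rule exI[of _ d], intro conjI)
      show "V' \<subseteq> V" unfolding V'_def using I(1) IH(1) W(1) RW
        unfolding J_def P_def Q_def by blast
      show "card V' = N" unfolding V'_def using card_Un_disjoint[OF finI finV'' IR] I(2) IH(2) sN
        by simp
      show "\<forall>v\<in>V'. d v < Suc k'" unfolding V'_def d_def using IH(3) by auto
      show "\<forall>u\<in>V'. \<forall>w\<in>V'. adj E u w \<longrightarrow> d u \<noteq> d w"
      proof (intro ballI impI)
        fix u w assume u: "u \<in> V'" and w: "w \<in> V'" and uw: "adj E u w"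
        show "d u \<noteq> d w"
        proof (cases "u \<in> I")
          case True
          show ?thesis
          proof (cases "w \<in> I")
            case True
            thus ?thesis using indep[OF _ _ uw] \<open>u \<in> I\<close> I(1) by blast
          next
            case False
            thus ?thesis using True w IH(3) unfolding d_def V'_def by fastforce
          qed
        next
          case False
          show ?thesis
          proof (cases "w \<in> I")
            case True
            thus ?thesis using False u IH(3) unfolding d_def V'_def by fastforce
          next
            case F2: False
            thus ?thesis using False u w uw IH(4) unfolding d_def V'_def by auto
          qed
        qed
      qed
      show "\<forall>i<Suc k'. card {v\<in>V'. d v = i} = (N + i) div Suc k'"
      proof (intro allI impI)
        fix i assume i: "i < Suc k'"
        show "card {v\<in>V'. d v = i} = (N + i) div Suc k'"
        proof (cases "i = k'")
          case True
          have "{v\<in>V'. d v = i} = I" using True IH(3) IR unfolding V'_def d_def by fastforce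
          thus ?thesis using I(2) True s_def by simp
        next
          case False
          hence ik: "i < k'" using i by simp
          have "{v\<in>V'. d v = i} = {v\<in>V''. d'' v = i}" using ik IR unfolding V'_def d_def by auto
          thus ?thesis using IH(5) ik div_shift[OF k1 ik, of N] s_def by simp
        qed
      qed
    qed
  qed
qed


lemma key_order:
  fixes V :: "'a set" and E :: "'a set set"
  assumes pd: "path_decomposition V E Bs" and bags: "\<forall>B\<in>set Bs. card B \<le> p + 1"
    and fin: "finite V"
  shows "\<exists>\<kappa>. inj_on \<kappa> V \<and> (\<forall>T. card (cutset E \<kappa> V T) \<le> p)"
proof -
  have pd1: "\<forall>B\<in>set Bs. B \<subseteq> V" and pd2: "\<forall>v\<in>V. \<exists>i<length Bs. v \<in> Bs ! i"
    and pd3: "\<forall>e\<in>E. \<exists>i<length Bs. e \<subseteq> Bs ! i"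
    using pd unfolding path_decomposition_def by simp_all
  have pd4: "\<And>v i j l. i \<le> j \<Longrightarrow> j \<le> l \<Longrightarrow> l < length Bs \<Longrightarrow> v \<in> Bs ! i \<Longrightarrow> v \<in> Bs ! l \<Longrightarrow> v \<in> Bs ! j"
    using pd unfolding path_decomposition_def by metis
  obtain g n0 where g: "g ` V = {i::nat. i < n0}" "inj_on g V"
    using finite_imp_inj_to_nat_seg[OF fin] by blast
  have gl: "g v < n0" if "v \<in> V" for v using g(1) that by blast
  define f where "f v = (LEAST i. i < length Bs \<and> v \<in> Bs ! i)" for v
  have f1: "f v < length Bs \<and> v \<in> Bs ! f v" if "v \<in> V" for v
  proof -
    have "\<exists>i. i < length Bs \<and> v \<in> Bs ! i" using pd2 that by blast
    thus ?thesis unfolding f_def by (rule LeastI_ex)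
  qed
  have f2: "f v \<le> i" if "i < length Bs" "v \<in> Bs ! i" for v i
    unfolding f_def by (rule Least_le) (use that in blast)
  define \<kappa> where "\<kappa> v = f v * n0 + g v" for v
  have kdiv: "\<kappa> v div n0 = f v" "\<kappa> v mod n0 = g v" if "v \<in> V" for v
    using gl[OF that] unfolding \<kappa>_def by auto
  have inj: "inj_on \<kappa> V"
  proof (rule inj_onI)
    fix u w assume "u \<in> V" "w \<in> V" "\<kappa> u = \<kappa> w"
    hence "g u = g w" using kdiv by metis
    thus "u = w" using g(2) \<open>u \<in> V\<close> \<open>w \<in> V\<close> by (auto dest: inj_onD)
  qed
  have mono: "f u \<le> f w" if "u \<in> V" "w \<in> V" "\<kappa> u \<le> \<kappa> w" for u w
    using div_le_mono[OF that(3), of n0] kdiv that by metis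
  have cut: "card (cutset E \<kappa> V T) \<le> p" for T
  proof (cases "cutset E \<kappa> V T = {}")
    case True thus ?thesis by simp
  next
    case False
    then obtain u0 w0 where "w0 \<in> V" "T \<le> \<kappa> w0" unfolding cutset_def by blast
    then obtain x where x: "x \<in> V \<and> T \<le> \<kappa> x" "\<forall>y. y \<in> V \<and> T \<le> \<kappa> y \<longrightarrow> \<kappa> x \<le> \<kappa> y"
      using ex_has_least_nat[of "\<lambda>y. y \<in> V \<and> T \<le> \<kappa> y" w0 \<kappa>] by blast
    define C where "C = Bs ! f x"
    have xC: "x \<in> C" "f x < length Bs" using f1 x(1) unfolding C_def by auto
    have CB: "C \<in> set Bs" using xC(2) unfolding C_def by simp
    have CV: "C \<subseteq> V" using CB pd1 by blast
    have finC: "finite C" using CV fin finite_subset by blast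
    have sub: "cutset E \<kappa> V T \<subseteq> C - {x}"
    proof
      fix u assume "u \<in> cutset E \<kappa> V T"
      then obtain w where u: "u \<in> V" "\<kappa> u < T" and w: "w \<in> V" "T \<le> \<kappa> w" "adj E u w"
        unfolding cutset_def by blast
      obtain e where e: "e \<in> E" "u \<in> e" "w \<in> e" using w(3) unfolding adj_def by blast
      obtain i where i: "i < length Bs" "e \<subseteq> Bs ! i"
        using pd3 e(1) by blast
      have "f w \<le> i" using f2 i e by blast
      moreover have "f x \<le> f w" using mono x w by blast
      moreover have "f u \<le> f x" using mono u x by (meson less_imp_le order_trans)
      moreover have "u \<in> Bs ! f u" using f1 u(1) by blast
      moreover have "u \<in> Bs ! i" using i e by blast
      ultimately have "u \<in> C" using pd4[of "f u" "f x" i u] i(1) unfolding C_def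
        by linarith
      moreover have "u \<noteq> x" using u(2) x(1) by auto
      ultimately show "u \<in> C - {x}" by blast
    qed
    have "card (cutset E \<kappa> V T) \<le> card (C - {x})" by (rule card_mono) (use finC sub in auto)
    also have "\<dots> = card C - 1" using xC(1) finC by simp
    also have "\<dots> \<le> p" using bags CB by fastforce
    finally show ?thesis .
  qed
  show ?thesis using inj cut by blast
qed

theorem theorem4:
  fixes V :: "'a set" and E :: "'a set set" and k p :: nat
  assumes "graph V E"
    and "colorable V E k"
    and "pathwidth_le V E p"
  shows "almost_equitably_colorable V E (p * (k - 1)) k"
proof -
  have fin: "finite V" and Esub: "\<forall>e\<in>E. e \<subseteq> V" using assms(1) unfolding graph_def by auto
  obtain c where c: "proper_coloring V E k c" using assms(2) unfolding colorable_def by blast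
  have ck: "\<forall>v\<in>V. c v < k" using c unfolding proper_coloring_def by blast
  have cp: "\<forall>u\<in>V. \<forall>w\<in>V. adj E u w \<longrightarrow> c u \<noteq> c w"
    using c unfolding proper_coloring_def adj_def by blast
  obtain Bs where Bs: "path_decomposition V E Bs" "\<forall>B\<in>set Bs. card B \<le> p + 1"
    using assms(3) unfolding pathwidth_le_def by blast
  obtain \<kappa> where \<kappa>: "inj_on \<kappa> V" "\<forall>T. card (cutset E \<kappa> V T) \<le> p"
    using key_order[OF Bs fin] by blast
  show ?thesis
  proof (cases "p * (k - 1) \<le> card V")
    case True
    define N where "N = card V - p * (k - 1)"
    have Np: "N + p * (k - 1) \<le> card V" using True N_def by simp
    obtain V' d where V': "V' \<subseteq> V" "card V' = N" "\<forall>v\<in>V'. d v < k"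
      "\<forall>u\<in>V'. \<forall>w\<in>V'. adj E u w \<longrightarrow> d u \<noteq> (d w :: nat)"
      "\<forall>i<k. card {v\<in>V'. d v = i} = (N + i) div k"
      using main_lemma[OF fin \<kappa>(1) \<kappa>(2) ck cp Np] by blast
    define X where "X = V - V'"
    have VX: "V - X = V'" unfolding X_def using V'(1) by blast
    have cX: "card X = p * (k - 1)" unfolding X_def
      using card_Diff_subset[OF finite_subset[OF V'(1) fin] V'(1)] V'(2) N_def True by simp
    have eq: "equitable_coloring V' {e\<in>E. e \<inter> X = {}} k d"
      unfolding equitable_coloring_def proper_coloring_def
    proof (intro conjI ballI allI impI)
      show "d v < k" if "v \<in> V'" for v using V'(3) that by blast
    next
      fix e u v assume e: "e \<in> {e\<in>E. e \<inter> X = {}}" and uv: "u \<in> e" "v \<in> e" "u \<noteq> v"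
      have "e \<subseteq> V'" using e Esub VX by blast
      moreover have "adj E u v" using e uv unfolding adj_def by blast
      ultimately show "d u \<noteq> d v" using V'(4) uv by blast
    next
      fix i j assume ij: "i < k" "j < k"
      have "(N + i) div k \<le> (N + k) div k" by (rule div_le_mono) (use ij in simp)
      also have "\<dots> = N div k + 1" using ij div_add_self2[of k N] by (metis not_less0)
      also have "N div k \<le> (N + j) div k" by (rule div_le_mono) simp
      finally have "(N + i) div k \<le> (N + j) div k + 1" by simp
      thus "card {v\<in>V'. d v = i} \<le> card {v\<in>V'. d v = j} + 1" using V'(5) ij by simp
    qed
    have XV: "X \<subseteq> V" unfolding X_def by blast
    show ?thesis unfolding almost_equitably_colorable_def delete_vertices_def
    proof (intro exI[of _ X] conjI)
      show "X \<subseteq> V" by (rule XV)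
      show "card X \<le> p * (k - 1)" using cX by simp
      show "case (V - X, {e \<in> E. e \<inter> X = {}}) of (V', E') \<Rightarrow> equitably_colorable V' E' k"
        unfolding VX equitably_colorable_def using eq by auto
    qed
  next
    case False
    have eq: "equitable_coloring {} {e\<in>E. e \<inter> V = {}} k (\<lambda>_. 0)"
      unfolding equitable_coloring_def proper_coloring_def
      using Esub assms(1) unfolding graph_def by (auto simp: card_gt_0_iff)
    show ?thesis unfolding almost_equitably_colorable_def delete_vertices_def
    proof (intro exI[of _ V] conjI)
      show "card V \<le> p * (k - 1)" using False by simp
      show "case (V - V, {e \<in> E. e \<inter> V = {}}) of (V', E') \<Rightarrow> equitably_colorable V' E' k"
        unfolding equitably_colorable_def using eq by auto
    qed simp
  qed
qed
end
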